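(* Let $x,y$ be non-commuting indeterminates and $C=xyx^{-1}y^{-1}$. Let $(R_n)_{n\in\mathbb Z}$ be the solution of $$R_{n+1}CR_{n-1}=R_n^2+1\qquad(n\in\mathbb Z)$$ with $R_0=yxy^{-1}$ and $R_1=y$. Let $$K=R_1R_0^{-1}+R_1^{-1}R_0^{-1}+R_1^{-1}R_0.$$ Then for all $n\in\mathbb Z$, $$R_{n+1}C+R_{n-1}=R_nK\qquad\text{and}\qquad R_{n+1}+CR_{n-1}=KR_n.$$
   Context: Work in the free skew field (non-commutative rational functions) over $\mathbb C$ generated by $x,y$. *)

theory Defs
  imports Main
begin

definition commC :: "'a::division_ring \<Rightarrow> 'a \<Rightarrow> 'a" where
  "commC x y = x * y * inverse x * inverse y"

definition invK :: "'a::division_ring \<Rightarrow> 'a \<Rightarrow> 'a" where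
  "invK R0 R1 = R1 * inverse R0 + inverse R1 * inverse R0 + inverse R1 * R0"

end

theory Submission
  imports Defs
begin

lemma L1:
  fixes a b c C :: "'a::division_ring"
  assumes nz: "a \<noteq> 0" "b \<noteq> 0" "c \<noteq> 0" "C \<noteq> 0"
    and rec: "c*C*a = b^2+1" and I: "b*C*a = a*b"
  shows "c*C*b = b*c"
proof -
  define s where "s = b^2+1"
  have sb: "b*s = s*b" by (simp add: s_def distrib_left distrib_right power2_eq_square mult.assoc)
  have "c*C = (c*C*a)*inverse a" using nz by (simp add: mult.assoc)
  hence cC: "c*C = s*inverse a" by (simp add: rec s_def)
  have "c = c*C*inverse C" using nz by (simp add: mult.assoc)
  hence c: "c = s*inverse a*inverse C" using cC by simp
  have "b = (b*C*a)*inverse a*inverse C" using nz by (simp add: mult.assoc)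
  hence bb: "b = a*b*inverse a*inverse C" using I by simp
  have key: "inverse a * b = b*inverse a*inverse C"
  proof -
    have "inverse a * b = inverse a * (a*b*inverse a*inverse C)" using bb by simp
    also have "\<dots> = b*inverse a*inverse C" using nz by (simp add: mult.assoc[symmetric])
    finally show ?thesis .
  qed
  have "c*C*b = s*(inverse a*b)" using cC by (simp add: mult.assoc)
  also have "\<dots> = s*(b*inverse a*inverse C)" by (simp add: key)
  also have "\<dots> = (s*b)*inverse a*inverse C" by (simp add: mult.assoc)
  also have "\<dots> = (b*s)*inverse a*inverse C" by (simp add: sb)
  also have "\<dots> = b*c" by (simp add: c mult.assoc)
  finally show ?thesis .
qed

lemma L2:
  fixes a b c C :: "'a::division_ring"
  assumes nz: "a \<noteq> 0" "b \<noteq> 0" "c \<noteq> 0" "C \<noteq> 0"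
    and rec: "c*C*a = b^2+1" and I: "c*C*b = b*c"
  shows "b*C*a = a*b"
proof -
  define s where "s = b^2+1"
  have sb: "b*s = s*b" by (simp add: s_def distrib_left distrib_right power2_eq_square mult.assoc)
  have "C*a = inverse c*(c*C*a)" using nz by (simp add: mult.assoc[symmetric])
  hence Ca: "C*a = inverse c * s" by (simp add: rec s_def)
  have "a = inverse C*(C*a)" using nz by (simp add: mult.assoc[symmetric])
  hence a: "a = inverse C * inverse c * s" using Ca by (simp add: mult.assoc)
  have "c*C*b*inverse c = b*c*inverse c" using I by simp
  hence bb: "b = c*C*b*inverse c" using nz by (simp add: mult.assoc)
  have key: "b*inverse c = inverse C*inverse c*b"
  proof -
    have "inverse C*inverse c*b = inverse C*inverse c*(c*C*b*inverse c)" using bb by simp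
    also have "\<dots> = inverse C*((inverse c*c)*C)*b*inverse c" by (simp add: mult.assoc)
    also have "\<dots> = b*inverse c" using nz by simp
    finally show ?thesis by simp
  qed
  have "b*C*a = (b*inverse c)*s" using Ca by (simp add: mult.assoc)
  also have "\<dots> = inverse C*inverse c*(b*s)" by (simp add: key mult.assoc)
  also have "\<dots> = inverse C*inverse c*(s*b)" by (simp add: sb)
  also have "\<dots> = a*b" by (simp add: a mult.assoc)
  finally show ?thesis .
qed

lemma L4:
  fixes a b c C :: "'a::division_ring"
  assumes nz: "a \<noteq> 0" "b \<noteq> 0" "c \<noteq> 0" "C \<noteq> 0"
    and rec: "c*C*a = b^2+1"
  shows "c*C + a = b*(b*inverse a + inverse b*inverse a + inverse b*a)"
proof -
  have "c*C = (c*C*a)*inverse a" using nz by (simp add: mult.assoc)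
  hence cC: "c*C = (b^2+1)*inverse a" by (simp add: rec)
  show ?thesis using nz unfolding cC
    by (simp add: distrib_left distrib_right power2_eq_square mult.assoc[symmetric])
qed

lemma L5:
  fixes a b c C :: "'a::division_ring"
  assumes nz: "a \<noteq> 0" "b \<noteq> 0" "c \<noteq> 0" "C \<noteq> 0"
    and rec: "c*C*a = b^2+1"
  shows "c + C*a = (c*inverse b + inverse c*inverse b + inverse c*b)*b"
proof -
  have "C*a = inverse c*(c*C*a)" using nz by (simp add: mult.assoc[symmetric])
  hence Ca: "C*a = inverse c*(b^2+1)" by (simp add: rec)
  show ?thesis using nz unfolding Ca
    by (simp add: distrib_left distrib_right power2_eq_square mult.assoc)
qed

lemma L3:
  fixes a b c C :: "'a::division_ring"
  assumes nz: "a \<noteq> 0" "b \<noteq> 0" "c \<noteq> 0" "C \<noteq> 0"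
    and rec: "c*C*a = b^2+1" and I: "b*C*a = a*b"
  shows "c*inverse b + inverse c*inverse b + inverse c*b = b*inverse a + inverse b*inverse a + inverse b*a"
proof -
  define s where "s = b^2+1"
  have sb: "b*s = s*b" by (simp add: s_def distrib_left distrib_right power2_eq_square mult.assoc)
  have snz: "s \<noteq> 0" using rec nz by (metis s_def no_zero_divisors)
  have sib: "inverse s * b = b * inverse s"
  proof -
    have "inverse s * b = inverse s * (b*s) * inverse s" using snz by (simp add: mult.assoc)
    also have "\<dots> = inverse s * (s*b) * inverse s" by (simp add: sb)
    also have "\<dots> = b * inverse s" using snz by (simp add: mult.assoc[symmetric])
    finally show ?thesis .
  qed
  have "C*a = inverse b*(b*C*a)" using nz by (simp add: mult.assoc[symmetric])
  hence Ca: "C*a = inverse b * a * b" using I by (simp add: mult.assoc)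
  have "c = (c*(C*a))*inverse (C*a)" using nz by (subst mult.assoc) simp
  moreover have r': "c*(C*a) = s" using rec by (simp add: s_def mult.assoc)
  ultimately have c: "c = s*inverse(C*a)" by (simp only: r')
  have "inverse c = inverse (inverse (C*a)) * inverse s" unfolding c using snz nz
    by (simp add: nonzero_inverse_mult_distrib)
  hence ic: "inverse c = C*a*inverse s" by simp
  have iCa: "inverse (C*a) = inverse b * inverse a * b" using Ca nz
    by (simp add: nonzero_inverse_mult_distrib mult.assoc)
  have t1: "c*inverse b = b*inverse a + inverse b*inverse a"
  proof -
    have "c*inverse b = s*inverse b*inverse a" using c iCa nz by (simp add: mult.assoc)
    also have "\<dots> = b*inverse a + inverse b*inverse a" using nz
      by (simp add: s_def distrib_right power2_eq_square mult.assoc)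
    finally show ?thesis .
  qed
  have bs: "inverse b + b = inverse b * s" using nz by (simp add: s_def distrib_left power2_eq_square mult.assoc[symmetric])
  have sbs: "inverse s*inverse b*s = inverse b"
  proof -
    have "inverse b * s = s * inverse b" using sb nz
      by (metis (no_types) mult.assoc left_inverse right_inverse mult_1_left mult_1_right)
    hence "inverse s*inverse b*s = inverse s*(s*inverse b)" by (simp add: mult.assoc)
    also have "\<dots> = inverse b" using snz by (simp add: mult.assoc[symmetric])
    finally show ?thesis .
  qed
  have t2: "inverse c*inverse b + inverse c*b = inverse b * a"
  proof -
    have "inverse c*inverse b + inverse c*b = inverse c*(inverse b + b)" by (simp add: distrib_left)
    also have "\<dots> = inverse b*a*b*(inverse s*inverse b*s)" using ic Ca bs by (simp add: mult.assoc)
    also have "\<dots> = inverse b*a*b*inverse b" by (simp only: sbs)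
    also have "\<dots> = inverse b*a" using nz by (simp add: mult.assoc)
    finally show ?thesis .
  qed
  show ?thesis using t1 t2 by (simp add: add.assoc)
qed


theorem lemma3p2:
  fixes x y :: "'a::{division_ring, ring_char_0}" and R :: "int \<Rightarrow> 'a"
  assumes rec: "\<And>n. R (n + 1) * commC x y * R (n - 1) = R n ^ 2 + 1"
    and init0: "R 0 = y * x * inverse y"
    and init1: "R 1 = y"
    and nz: "\<And>n. R n \<noteq> 0"
  shows "\<forall>n. R (n + 1) * commC x y + R (n - 1) = R n * invK (R 0) (R 1)
           \<and> R (n + 1) + commC x y * R (n - 1) = invK (R 0) (R 1) * R n"
proof -
  define C where "C = commC x y"
  have ynz: "y \<noteq> 0" using nz[of 1] init1 by simp
  have xnz: "x \<noteq> 0" using nz[of 0] init0 by auto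
  have Cnz: "C \<noteq> 0" using xnz ynz by (simp add: C_def commC_def)
  have recC: "\<And>n. R (n + 1) * C * R (n - 1) = R n ^ 2 + 1" using rec by (simp add: C_def)
  have I0: "R (0+1) * C * R 0 = R 0 * R (0+1)"
  proof -
    have c1: "\<And>a b::'a. a \<noteq> 0 \<Longrightarrow> b*inverse a*a = b" by (simp add: mult.assoc)
    have c2: "\<And>a b::'a. a \<noteq> 0 \<Longrightarrow> b*a*inverse a = b" by (simp add: mult.assoc)
    show ?thesis using xnz ynz by (simp add: init0 init1 C_def commC_def mult.assoc[symmetric] c1 c2)
  qed
  have I: "R (n+1) * C * R n = R n * R (n+1)" for n
  proof (induction n rule: int_induct[where k=0])
    case base then show ?case by (rule I0)
  next
    case (step1 i)
    have r: "R (i+1+1) * C * R i = R (i+1)^2 + 1" using recC[of "i+1"] by simp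
    show ?case using L1[OF nz[of i] nz[of "i+1"] nz[of "i+1+1"] Cnz r step1(2)] .
  next
    case (step2 i)
    have r: "R (i+1) * C * R (i-1) = R i^2 + 1" using recC[of i] by simp
    have "R i * C * R (i-1) = R (i-1) * R i"
      using L2[OF nz[of "i-1"] nz[of i] nz[of "i+1"] Cnz r step2(2)] .
    then show ?case by simp
  qed
  define KK where "KK n = R(n+1)*inverse(R n) + inverse(R(n+1))*inverse(R n) + inverse(R(n+1))*R n" for n
  have KKstep: "KK n = KK (n-1)" for n
  proof -
    have Im: "R n * C * R (n-1) = R (n-1) * R n" using I[of "n-1"] by simp
    show ?thesis using L3[OF nz[of "n-1"] nz[of n] nz[of "n+1"] Cnz recC[of n] Im]
      by (simp add: KK_def)
  qed
  have KK: "KK n = KK 0" for n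
  proof (induction n rule: int_induct[where k=0])
    case base then show ?case by simp
  next
    case (step1 i) then show ?case using KKstep[of "i+1"] by simp
  next
    case (step2 i) then show ?case using KKstep[of i] by simp
  qed
  have K: "invK (R 0) (R 1) = KK 0" by (simp add: invK_def KK_def)
  show ?thesis
  proof
    fix n
    have A: "R (n+1) * C + R (n-1) = R n * KK (n-1)"
      using L4[OF nz[of "n-1"] nz[of n] nz[of "n+1"] Cnz recC[of n]] by (simp add: KK_def)
    have B: "R (n+1) + C * R (n-1) = KK n * R n"
      using L5[OF nz[of "n-1"] nz[of n] nz[of "n+1"] Cnz recC[of n]] by (simp add: KK_def)
    show "R (n + 1) * commC x y + R (n - 1) = R n * invK (R 0) (R 1)
           \<and> R (n + 1) + commC x y * R (n - 1) = invK (R 0) (R 1) * R n"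
      using A B KK[of n] KK[of "n-1"] K by (simp add: C_def)
  qed
qed

end
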